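(* For every integer $n\ge0$, $$\sum_{i=0}^n-{n\brace i}(-2)^{-2i}=(-2)^{-2n-1}.$$
   Context: The Euler polynomials $E_n(x)$ are defined by $\frac{2e^{xt}}{e^t+1}=\sum_{n\ge0}E_n(x)\frac{t^n}{n!}$. For $N\ge0$, the numbers ${N\brace j}$ ($0\le j\le N$) are defined by $\sum_{j=0}^N{N\brace j}x^{2j}=x^{2N+1}-E_{2N+1}(x)$. *)

theory Defs
  imports Complex_Main "HOL-Computational_Algebra.Formal_Power_Series"
begin

definition euler_poly :: "nat \<Rightarrow> real \<Rightarrow> real" where
  "euler_poly n x = fact n * fps_nth (fps_const 2 * fps_exp x / (fps_exp 1 + 1)) n"

definition euler_brace :: "nat \<Rightarrow> nat \<Rightarrow> real" where
  "euler_brace N = (THE c. (\<forall>x::real. (\<Sum>j=0..N. c j * x ^ (2*j))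
       = x ^ (2*N+1) - euler_poly (2*N+1) x) \<and> (\<forall>j>N. c j = 0))"

end

theory Submission
  imports Defs
begin

unbundle fps_syntax

definition rf :: "real fps \<Rightarrow> real fps" where
  "rf f = Abs_fps (\<lambda>k. (-1)^k * f$k)"

lemma rf_nth [simp]: "rf f $ k = (-1)^k * f$k"
  by (simp add: rf_def)

lemma rf_mult: "rf (f*g) = rf f * rf g"
proof (rule fps_ext)
  fix n
  have "(\<Sum>i=0..n. (-1)^n * (f$i * g$(n-i))) = (\<Sum>i=0..n. ((-1)^i * f$i) * ((-1)^(n-i) * g$(n-i)))"
  proof (rule sum.cong)
    fix i assume "i \<in> {0..n}"
    hence "(-1::real)^n = (-1)^i * (-1)^(n-i)"
      by (simp add: power_add[symmetric])
    thus "(-1)^n * (f$i * g$(n-i)) = ((-1)^i * f$i) * ((-1)^(n-i) * g$(n-i))" by simp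
  qed simp
  thus "rf (f*g) $ n = (rf f * rf g) $ n"
    by (simp only: rf_nth fps_mult_nth sum_distrib_left)
qed

lemma rf_add: "rf (f+g) = rf f + rf g"
  by (rule fps_ext) (simp add: algebra_simps)

lemma rf_const: "rf (fps_const c) = fps_const c"
  by (rule fps_ext) simp

lemma rf_one: "rf 1 = 1"
  by (rule fps_ext) simp

lemma rf_exp: "rf (fps_exp a) = fps_exp (-a)"
  by (rule fps_ext) (simp only: rf_nth fps_exp_nth power_minus[of a] times_divide_eq_right)

definition DD :: "real fps" where "DD = fps_exp 1 + 1"
definition QQ :: "real \<Rightarrow> real fps" where "QQ x = fps_const 2 * fps_exp x / DD"

lemma DD0: "DD $ 0 = 2" by (simp add: DD_def)
lemma DD_nz: "DD \<noteq> 0" using DD0 by auto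

lemma QQ_D: "QQ x * DD = fps_const 2 * fps_exp x"
proof -
  have "QQ x = fps_const 2 * fps_exp x * inverse DD"
    unfolding QQ_def using DD0 by (simp add: fps_divide_unit)
  moreover have "inverse DD * DD = 1" using DD0 by (intro inverse_mult_eq_1) simp
  ultimately show ?thesis by (simp add: mult.assoc)
qed

lemma QQ_unique: "A * DD = B * DD \<Longrightarrow> A = B"
  using DD_nz by simp

lemma ee: "fps_exp (1::real) * fps_exp (-1) = 1"
  using fps_exp_add_mult[of "1::real" "-1"] by simp

lemma rf_QQ: "rf (QQ x) = QQ (1 - x)"
proof (rule QQ_unique)
  have RD: "rf DD = fps_exp (-1) + 1" by (simp add: DD_def rf_add rf_exp rf_one)
  have "rf (QQ x) * rf DD = fps_const 2 * fps_exp (-x)"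
    using QQ_D[of x] by (metis rf_mult rf_const rf_exp)
  hence "rf (QQ x) * rf DD * fps_exp 1 = fps_const 2 * fps_exp (-x) * fps_exp 1" by simp
  moreover have "rf DD * fps_exp 1 = DD"
  proof -
    have "rf DD * fps_exp 1 = fps_exp 1 * fps_exp (-1) + fps_exp 1"
      by (simp add: RD distrib_left mult.commute)
    thus ?thesis using ee by (simp add: DD_def add.commute)
  qed
  moreover have "fps_exp (-x) * fps_exp 1 = fps_exp (1 - x)"
    using fps_exp_add_mult[of "-x" 1] by simp
  ultimately show "rf (QQ x) * DD = QQ (1 - x) * DD"
    by (simp add: QQ_D mult.assoc)
qed

lemma QQ_sum: "QQ x + QQ (x+1) = fps_const 2 * fps_exp x"
proof (rule QQ_unique)
  show "(QQ x + QQ (x+1)) * DD = fps_const 2 * fps_exp x * DD"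
  proof -
    have "(QQ x + QQ (x+1)) * DD = fps_const 2 * fps_exp x + fps_const 2 * fps_exp (x+1)"
      by (simp only: distrib_right QQ_D)
    also have "\<dots> = fps_const 2 * fps_exp x * (fps_exp 1 + 1)"
      by (simp add: fps_exp_add_mult distrib_left mult.assoc)
    finally show ?thesis by (simp add: DD_def)
  qed
qed

lemma QQ_exp: "QQ x = fps_exp x * QQ 0"
proof (rule QQ_unique)
  show "QQ x * DD = fps_exp x * QQ 0 * DD"
  proof -
    have "fps_exp x * QQ 0 * DD = fps_exp x * (QQ 0 * DD)" by (simp only: mult.assoc)
    also have "\<dots> = fps_exp x * fps_const 2" by (simp add: QQ_D)
    finally show ?thesis using QQ_D[of x] by (metis mult.commute)
  qed
qed

lemma euler_QQ: "euler_poly n x = fact n * QQ x $ n"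
  unfolding euler_poly_def QQ_def DD_def by (rule refl)

definition gg :: "nat \<Rightarrow> real" where "gg k = QQ 0 $ k"

lemma gg0: "gg 0 = 1"
proof -
  have "(QQ 0 * DD) $ 0 = (fps_const 2 * fps_exp 0) $ 0" by (simp only: QQ_D)
  hence "QQ 0 $ 0 * 2 = 2" by (simp add: DD0)
  thus ?thesis by (simp add: gg_def)
qed

lemma gg_even: "even k \<Longrightarrow> k > 0 \<Longrightarrow> gg k = 0"
proof -
  assume "even k" "k > 0"
  have "QQ 0 + rf (QQ 0) = fps_const 2"
    using QQ_sum[of 0] rf_QQ[of 0] by simp
  from arg_cong[OF this, of "\<lambda>f. f$k"] have "QQ 0 $ k + (-1)^k * QQ 0 $ k = 0"
    using \<open>k > 0\<close> by (simp only: fps_add_nth rf_nth fps_nth_fps_const) simp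
  moreover have "(-1::real)^k = 1" using \<open>even k\<close> by simp
  ultimately show "gg k = 0" by (simp add: gg_def)
qed

lemma euler_half: "odd n \<Longrightarrow> euler_poly n (1/2) = 0"
proof -
  assume "odd n"
  have h: "1 - 1/2 = (1/2::real)" by simp
  have "rf (QQ (1/2)) = QQ (1/2)" using rf_QQ[of "1/2"] by (simp only: h)
  from arg_cong[OF this, of "\<lambda>f. f$n"] have "(-1)^n * QQ (1/2) $ n = QQ (1/2) $ n"
    by (simp only: rf_nth)
  moreover have "(-1::real)^n = -1" using \<open>odd n\<close> by simp
  ultimately have "- (QQ (1/2) $ n) = QQ (1/2) $ n" by (metis mult_minus1)
  hence "QQ (1/2) $ n = 0" by linarith
  thus ?thesis by (simp only: euler_QQ mult_zero_right)
qed

lemma euler_sum: "euler_poly n x = (\<Sum>i\<le>n. fact n / fact i * gg (n-i) * x^i)"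
proof -
  have "euler_poly n x = fact n * (\<Sum>i=0..n. x^i / fact i * gg (n-i))"
    by (simp add: euler_QQ QQ_exp[of x] fps_mult_nth gg_def)
  also have "\<dots> = (\<Sum>i\<le>n. fact n / fact i * gg (n-i) * x^i)"
    unfolding sum_distrib_left atLeast0AtMost by (intro sum.cong) auto
  finally show ?thesis .
qed

definition cc :: "nat \<Rightarrow> nat \<Rightarrow> real" where
  "cc N j = (if j \<le> N then - (fact (2*N+1) / fact (2*j) * gg (2*N+1-2*j)) else 0)"

lemma cc_exist: "(\<Sum>j=0..N. cc N j * x ^ (2*j)) = x ^ (2*N+1) - euler_poly (2*N+1) x"
proof -
  define a where "a i = fact (2*N+1) / fact i * gg (2*N+1-i) * x^i" for i
  have "euler_poly (2*N+1) x = (\<Sum>i\<le>Suc (2*N). a i)"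
    by (simp add: euler_sum a_def)
  also have "\<dots> = (\<Sum>j\<le>N. a (2*j) + a (Suc (2*j)))"
    by (rule sum.in_pairs_0)
  also have "\<dots> = (\<Sum>j\<le>N. a (2*j)) + (\<Sum>j\<le>N. a (Suc (2*j)))"
    by (rule sum.distrib)
  also have "(\<Sum>j\<le>N. a (Suc (2*j))) = (\<Sum>j\<le>N. if j = N then x^(2*N+1) else 0)"
  proof (rule sum.cong)
    fix j assume "j \<in> {..N}"
    hence jN: "j \<le> N" by simp
    show "a (Suc (2*j)) = (if j = N then x^(2*N+1) else 0)"
    proof (cases "j = N")
      case True
      thus ?thesis by (simp add: a_def gg0)
    next
      case False
      hence "even (2*N+1 - Suc (2*j))" "2*N+1 - Suc (2*j) > 0" using jN by auto
      hence "gg (2*N+1 - Suc (2*j)) = 0" by (rule gg_even)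
      thus ?thesis using False by (simp add: a_def)
    qed
  qed simp
  also have "\<dots> = x^(2*N+1)" by simp
  finally have E: "euler_poly (2*N+1) x = (\<Sum>j\<le>N. a (2*j)) + x^(2*N+1)" .
  have "(\<Sum>j=0..N. cc N j * x ^ (2*j)) = - (\<Sum>j\<le>N. a (2*j))"
    unfolding atLeast0AtMost sum_negf[symmetric]
    by (rule sum.cong) (auto simp: cc_def a_def)
  thus ?thesis using E by simp
qed

lemma cc_unique:
  fixes c d :: "nat \<Rightarrow> real"
  assumes "\<forall>x::real. (\<Sum>j=0..N. c j * x ^ (2*j)) = (\<Sum>j=0..N. d j * x ^ (2*j))"
    and "\<forall>j>N. c j = 0" and "\<forall>j>N. d j = 0"
  shows "c = d"
proof -
  define e where "e j = c j - d j" for j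
  have "{0::real..} \<subseteq> {y. (\<Sum>j\<le>N. e j * y^j) = 0}"
  proof
    fix y :: real assume "y \<in> {0..}"
    hence y: "sqrt y ^ 2 = y" by simp
    have yj: "sqrt y ^ (2*j) = y^j" for j by (simp add: power_mult y)
    have "(\<Sum>j\<le>N. e j * y^j) = (\<Sum>j=0..N. c j * sqrt y ^ (2*j)) - (\<Sum>j=0..N. d j * sqrt y ^ (2*j))"
      unfolding atLeast0AtMost sum_subtractf[symmetric] e_def
      by (rule sum.cong) (auto simp: yj left_diff_distrib)
    thus "y \<in> {y. (\<Sum>j\<le>N. e j * y^j) = 0}" using assms(1) by simp
  qed
  hence "\<not> finite {y. (\<Sum>j\<le>N. e j * y^j) = 0}"
    using infinite_Ici[of "0::real"] finite_subset by blast
  hence "\<forall>i\<le>N. e i = 0" using polyfun_finite_roots[of e N] by blast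
  thus ?thesis using assms(2,3) unfolding e_def
    by (metis eq_iff_diff_eq_0 not_le ext)
qed

lemma brace_cc: "euler_brace N = cc N"
  unfolding euler_brace_def
proof (rule the_equality)
  show "(\<forall>x::real. (\<Sum>j=0..N. cc N j * x ^ (2*j)) = x ^ (2*N+1) - euler_poly (2*N+1) x) \<and> (\<forall>j>N. cc N j = 0)"
    using cc_exist by (simp add: cc_def)
next
  fix c assume "(\<forall>x::real. (\<Sum>j=0..N. c j * x ^ (2*j)) = x ^ (2*N+1) - euler_poly (2*N+1) x) \<and> (\<forall>j>N. c j = 0)"
  hence H1: "\<forall>x::real. (\<Sum>j=0..N. c j * x ^ (2*j)) = x ^ (2*N+1) - euler_poly (2*N+1) x"
    and H2: "\<forall>j>N. c j = 0" by blast+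
  show "c = cc N"
  proof (rule cc_unique[where N=N])
    show "\<forall>x::real. (\<Sum>j=0..N. c j * x ^ (2*j)) = (\<Sum>j=0..N. cc N j * x ^ (2*j))"
      using H1 cc_exist by presburger
    show "\<forall>j>N. c j = 0" by (rule H2)
    show "\<forall>j>N. cc N j = 0" by (simp add: cc_def)
  qed
qed

theorem lemma5p7:
  fixes n :: nat
  shows "(\<Sum>i=0..n. - euler_brace n i * (-2::real) powi (- 2 * int i))
         = (-2::real) powi (- 2 * int n - 1)"
proof -
  have p: "(-2::real) powi (- 2 * int i) = (1/2) ^ (2*i)" for i
  proof -
    have "(-2::real) powi (- 2 * int i) = inverse ((-2) ^ (2*i))"
    proof -
      have "(-2::real) powi (int (2*i)) = (-2)^(2*i)" by (rule power_int_of_nat)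
      thus ?thesis using power_int_minus[of "-2::real" "int (2*i)"] by simp
    qed
    also have "\<dots> = (1/2) ^ (2*i)"
      by (simp add: power_one_over[symmetric] inverse_eq_divide)
    finally show ?thesis .
  qed
  have q: "(-2::real) powi (- 2 * int n - 1) = - ((1/2) ^ (2*n+1))"
  proof -
    have "(-2::real) powi (- 2 * int n - 1) = inverse ((-2) ^ (2*n+1))"
    proof -
      have "(-2::real) powi (int (2*n+1)) = (-2)^(2*n+1)" by (rule power_int_of_nat)
      moreover have "- 2 * int n - 1 = - int (2*n+1)" by simp
      ultimately show ?thesis using power_int_minus[of "-2::real" "int (2*n+1)"] by (simp only:)
    qed
    also have "\<dots> = - ((1/2) ^ (2*n+1))"
      by (simp add: power_one_over[symmetric] inverse_eq_divide)
    finally show ?thesis .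
  qed
  have "(\<Sum>i=0..n. - euler_brace n i * (-2::real) powi (- 2 * int i))
        = - (\<Sum>i=0..n. cc n i * (1/2) ^ (2*i))"
    unfolding p brace_cc sum_negf[symmetric] by simp
  also have "\<dots> = - ((1/2) ^ (2*n+1))"
    using cc_exist[of n "1/2"] euler_half[of "2*n+1"] by simp
  finally show ?thesis using q by simp
qed

end
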